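(* Let $\alpha<_c\beta$ with $\beta/\!\!/\alpha$ an nc border strip with $n$ boxes, and let $w\in CRHW_n$ satisfy $w(\alpha)=\beta$. If $j\in E(\beta/\!\!/\alpha)$, then $j\in\mathrm{leg}(w)$.
   Context: A composition is a finite sequence $\alpha=(\alpha_1,\dots,\alpha_k)$ of positive integers; $\ell(\alpha)=k$; its diagram is the set of boxes $(i,j)$, $1\le i\le\ell(\alpha)$, $1\le j\le\alpha_i$, rows top to bottom, columns left to right. For compositions $\gamma=(\gamma_1,\dots,\gamma_l)$, $\delta$ write $\gamma\lessdot_c\delta$ if $\delta=(1,\gamma_1,\dots,\gamma_l)$ or $\delta=(\gamma_1,\dots,\gamma_k+1,\dots,\gamma_l)$ with $\gamma_i\ne\gamma_k$ for all $i<k$; $<_c$ is the transitive closure. For $\gamma<_c\delta$, $\delta/\!\!/\gamma$ consists of the boxes of $\delta$ other than $(\ell(\delta)-\ell(\gamma)+i,j)$, $1\le i\le\ell(\gamma)$, $1\le j\le\gamma_i$. $\mathrm{supp}(\beta/\!\!/\alpha)$ is the set of columns containing a box of $\beta/\!\!/\alpha$; interval shape: supp is a set of consecutive integers. nc border strip: an interval shape such that (1) if $(i,1),(i,2)\in\beta/\!\!/\alpha$ then $(i,1)$ is the bottommost box of column 1 of $\beta/\!\!/\alpha$, and (2) if $(i,j),(i,j+1)\in\beta/\!\!/\alpha$ with $j\ge2$ then $(i,j)$ is the topmost box of column $j$ of $\beta/\!\!/\alpha$. $E(\beta/\!\!/\alpha)$ is the set of $j$ such that $(i,j),(i,j+1)\in\beta/\!\!/\alpha$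 for some $i$. Box-adding operators: $\mathfrak t_1(\alpha)=(1,\alpha_1,\dots,\alpha_k)$; for $i\ge2$, $\mathfrak t_i(\alpha)$ increases the leftmost part equal to $i-1$ by $1$, and is $0$ if none; $\mathfrak t_i(0)=0$. A word $w=\mathfrak t_{i_1}\cdots\mathfrak t_{i_n}$ acts by $w(\alpha)=\mathfrak t_{i_1}(\cdots\mathfrak t_{i_n}(\alpha))$; it is a reverse $k$-hookword if $i_1\le\cdots\le i_{k+1}>i_{k+2}>\cdots>i_n$, with $\mathrm{leg}(w)=\{i_{k+1},\dots,i_n\}$; connected if $\{i_1,\dots,i_n\}$ is a set of consecutive integers; $CRHW_n$ is the set of connected reverse hookwords of length $n$. *)

theory Defs
  imports Main
begin

text \<open>Compositions are lists of positive naturals. Boxes are pairs (row, column), 1-indexed,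
rows top to bottom.\<close>

definition is_comp :: "nat list \<Rightarrow> bool" where
  "is_comp a \<longleftrightarrow> (\<forall>x\<in>set a. 0 < x)"

definition diagram :: "nat list \<Rightarrow> (nat \<times> nat) set" where
  "diagram a = {(i, j). 1 \<le> i \<and> i \<le> length a \<and> 1 \<le> j \<and> j \<le> a ! (i - 1)}"

definition ccover :: "nat list \<Rightarrow> nat list \<Rightarrow> bool" where
  "ccover g d \<longleftrightarrow> d = 1 # g \<or>
     (\<exists>k < length g. d = g[k := g ! k + 1] \<and> (\<forall>i < k. g ! i \<noteq> g ! k))"

definition clt :: "nat list \<Rightarrow> nat list \<Rightarrow> bool" where
  "clt = tranclp ccover"

text \<open>The skew shape delta // gamma: boxes of delta other than the bottom-justified copy of gamma.\<close>
definition skew :: "nat list \<Rightarrow> nat list \<Rightarrow> (nat \<times> nat) set" where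
  "skew d g = diagram d -
     {(length d - length g + i, j) | i j. 1 \<le> i \<and> i \<le> length g \<and> 1 \<le> j \<and> j \<le> g ! (i - 1)}"

definition supp :: "(nat \<times> nat) set \<Rightarrow> nat set" where
  "supp S = snd ` S"

definition interval_shape :: "(nat \<times> nat) set \<Rightarrow> bool" where
  "interval_shape S \<longleftrightarrow> (\<forall>a b c. a \<in> supp S \<and> c \<in> supp S \<and> a \<le> b \<and> b \<le> c \<longrightarrow> b \<in> supp S)"

definition bottommost_in_col :: "(nat \<times> nat) set \<Rightarrow> nat \<Rightarrow> nat \<Rightarrow> bool" where
  "bottommost_in_col S i j \<longleftrightarrow> (i, j) \<in> S \<and> (\<forall>i'. (i', j) \<in> S \<longrightarrow> i' \<le> i)"

definition topmost_in_col :: "(nat \<times> nat) set \<Rightarrow> nat \<Rightarrow> nat \<Rightarrow> bool" where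
  "topmost_in_col S i j \<longleftrightarrow> (i, j) \<in> S \<and> (\<forall>i'. (i', j) \<in> S \<longrightarrow> i \<le> i')"

definition nc_border_strip :: "(nat \<times> nat) set \<Rightarrow> bool" where
  "nc_border_strip S \<longleftrightarrow> interval_shape S \<and>
     (\<forall>i. (i, 1) \<in> S \<and> (i, 2) \<in> S \<longrightarrow> bottommost_in_col S i 1) \<and>
     (\<forall>i j. 2 \<le> j \<and> (i, j) \<in> S \<and> (i, j + 1) \<in> S \<longrightarrow> topmost_in_col S i j)"

definition Eset :: "(nat \<times> nat) set \<Rightarrow> nat set" where
  "Eset S = {j. \<exists>i. (i, j) \<in> S \<and> (i, j + 1) \<in> S}"

text \<open>Box-adding operators; None plays the role of 0.\<close>
fun top_op :: "nat \<Rightarrow> nat list option \<Rightarrow> nat list option" where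
  "top_op i None = None"
| "top_op i (Some a) =
     (if i = 0 then None
      else if i = 1 then Some (1 # a)
      else if i - 1 \<in> set a
           then Some (a[(LEAST k. k < length a \<and> a ! k = i - 1) := i])
           else None)"

definition word_act :: "nat list \<Rightarrow> nat list \<Rightarrow> nat list option" where
  "word_act w a = foldr top_op w (Some a)"

text \<open>Reverse k-hookword (0-indexed list, so i_{m+1} = w ! m).\<close>
definition rev_khook :: "nat \<Rightarrow> nat list \<Rightarrow> bool" where
  "rev_khook k w \<longleftrightarrow> (\<forall>x\<in>set w. 1 \<le> x) \<and> k < length w \<and> sorted (take (Suc k) w) \<and>
     (\<forall>m. k \<le> m \<and> Suc m < length w \<longrightarrow> w ! Suc m < w ! m)"

definition leg :: "nat \<Rightarrow> nat list \<Rightarrow> nat set" where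
  "leg k w = set (drop k w)"

definition connected_word :: "nat list \<Rightarrow> bool" where
  "connected_word w \<longleftrightarrow> (\<forall>a b c. a \<in> set w \<and> c \<in> set w \<and> a \<le> b \<and> b \<le> c \<longrightarrow> b \<in> set w)"

definition CRHW :: "nat \<Rightarrow> nat list set" where
  "CRHW n = {w. length w = n \<and> connected_word w \<and> (\<exists>k. rev_khook k w)}"

end

theory Submission
  imports Defs
begin

definition LL :: "nat list \<Rightarrow> nat \<Rightarrow> nat" where
  "LL xs p = (if p < length xs then rev xs ! p else 0)"

lemma step_lemma:
  assumes "top_op x (Some g) = Some b"
  shows "1 \<le> x \<and> (\<exists>p. LL g p = x - 1 \<and> LL b = (LL g)(p := x))"
proof (cases "x = 1")
  case True
  then have b: "b = 1 # g" using assms by simp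
  have "LL b = (LL g)(length g := 1)"
  proof
    fix q show "LL b q = ((LL g)(length g := 1)) q"
      using b by (auto simp: LL_def nth_append)
  qed
  then show ?thesis using True by (auto simp: LL_def)
next
  case False
  have x0: "x \<noteq> 0" using assms by (auto split: if_splits)
  have mem: "x - 1 \<in> set g" using assms False x0 by (auto split: if_splits)
  define k where "k = (LEAST k. k < length g \<and> g ! k = x - 1)"
  have b: "b = g[k := x]" using assms False x0 mem by (simp add: k_def)
  have ex: "\<exists>k. k < length g \<and> g ! k = x - 1" using mem by (auto simp: in_set_conv_nth)
  have kk: "k < length g \<and> g ! k = x - 1" unfolding k_def by (rule LeastI_ex[OF ex])
  define p where "p = length g - k - 1"
  have "LL b = (LL g)(p := x)"
  proof
    fix q show "LL b q = ((LL g)(p := x)) q"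
      using b kk by (auto simp: LL_def rev_update p_def nth_list_update)
  qed
  moreover have "LL g p = x - 1" using kk
    by (auto simp: LL_def p_def rev_nth)
  ultimately show ?thesis using x0 by auto
qed

lemma claim:
  "word_act w a = Some b \<Longrightarrow>
    (\<forall>p. LL a p \<le> LL b p) \<and>
    (\<forall>p v. LL a p < v \<and> v \<le> LL b p \<longrightarrow> (\<exists>i<length w. w ! i = v)) \<and>
    (\<forall>p v. LL a p < v \<and> v < LL b p \<longrightarrow>
        (\<exists>i j. j < i \<and> i < length w \<and> w ! i = v \<and> w ! j = Suc v))"
proof (induction w arbitrary: b)
  case Nil
  then show ?case by (auto simp: word_act_def)
next
  case (Cons x w)
  from Cons.prems obtain g where g: "word_act w a = Some g" and gb: "top_op x (Some g) = Some b"
    by (cases "word_act w a") (auto simp: word_act_def)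
  note IH = Cons.IH[OF g]
  from step_lemma[OF gb] obtain p0 where x1: "1 \<le> x" and p0: "LL g p0 = x - 1"
    and Lb: "LL b = (LL g)(p0 := x)" by blast
  have A: "\<forall>p. LL a p \<le> LL b p"
  proof
    fix p
    have "LL g p \<le> LL b p" using Lb p0 x1 by auto
    then show "LL a p \<le> LL b p" using IH by (meson le_trans)
  qed
  have B: "\<forall>p v. LL a p < v \<and> v \<le> LL b p \<longrightarrow> (\<exists>i<length (x#w). (x#w) ! i = v)"
  proof (intro allI impI)
    fix p v assume h: "LL a p < v \<and> v \<le> LL b p"
    show "\<exists>i<length (x#w). (x#w) ! i = v"
    proof (cases "p = p0 \<and> v = x")
      case True then show ?thesis by (intro exI[of _ 0]) auto
    next
      case False
      then have "v \<le> LL g p" using h Lb p0 by (auto split: if_splits)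
      then obtain i where "i < length w" "w ! i = v" using IH h by blast
      then show ?thesis by (intro exI[of _ "Suc i"]) auto
    qed
  qed
  have C: "\<forall>p v. LL a p < v \<and> v < LL b p \<longrightarrow>
        (\<exists>i j. j < i \<and> i < length (x#w) \<and> (x#w) ! i = v \<and> (x#w) ! j = Suc v)"
  proof (intro allI impI)
    fix p v assume h: "LL a p < v \<and> v < LL b p"
    show "\<exists>i j. j < i \<and> i < length (x#w) \<and> (x#w) ! i = v \<and> (x#w) ! j = Suc v"
    proof (cases "p = p0 \<and> Suc v = x")
      case True
      then have "v \<le> LL g p" using p0 by auto
      then obtain i where "i < length w" "w ! i = v" using IH h by blast
      then show ?thesis using True by (intro exI[of _ "Suc i"] exI[of _ 0]) auto
    next
      case False
      then have "v < LL g p" using h Lb p0 by (auto split: if_splits)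
      then obtain i j where "j < i" "i < length w" "w ! i = v" "w ! j = Suc v" using IH h by blast
      then show ?thesis by (intro exI[of _ "Suc i"] exI[of _ "Suc j"]) auto
    qed
  qed
  show ?case using A B C by blast
qed

theorem mainTheorem12:
  fixes \<alpha> \<beta> w :: "nat list" and n j :: nat
  assumes "is_comp \<alpha>" and "is_comp \<beta>"
    and "clt \<alpha> \<beta>"
    and "nc_border_strip (skew \<beta> \<alpha>)"
    and "card (skew \<beta> \<alpha>) = n"
    and "w \<in> CRHW n"
    and "word_act w \<alpha> = Some \<beta>"
    and "j \<in> Eset (skew \<beta> \<alpha>)"
  shows "\<forall>k. rev_khook k w \<longrightarrow> j \<in> leg k w"
proof (intro allI impI)
  fix k assume hk: "rev_khook k w"
  note cl = claim[OF assms(7)]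
  have len: "length \<alpha> \<le> length \<beta>"
  proof (rule ccontr)
    assume "\<not> ?thesis"
    then have "length \<beta> < length \<alpha>" by simp
    moreover have "0 < LL \<alpha> (length \<beta>)" using assms(1) calculation
      by (auto simp: LL_def is_comp_def rev_nth)
    moreover have "LL \<beta> (length \<beta>) = 0" by (simp add: LL_def)
    ultimately show False using cl by (metis not_le)
  qed
  from assms(8) obtain i where i1: "(i, j) \<in> skew \<beta> \<alpha>" and i2: "(i, Suc j) \<in> skew \<beta> \<alpha>"
    by (auto simp: Eset_def)
  define p where "p = length \<beta> - i"
  from i2 have d2: "1 \<le> i" "i \<le> length \<beta>" "Suc j \<le> \<beta> ! (i - 1)"
    by (auto simp: skew_def diagram_def)
  from i1 have j1: "1 \<le> j" by (auto simp: skew_def diagram_def)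
  have Lb: "LL \<beta> p = \<beta> ! (i - 1)" using d2
    by (auto simp: LL_def p_def rev_nth)
  have La: "LL \<alpha> p < j"
  proof (cases "p < length \<alpha>")
    case False then show ?thesis using j1 by (simp add: LL_def)
  next
    case True
    define i' where "i' = length \<alpha> - p"
    have ii: "i = length \<beta> - length \<alpha> + i'" "1 \<le> i'" "i' \<le> length \<alpha>"
      using True d2 len by (auto simp: i'_def p_def)
    have "LL \<alpha> p = \<alpha> ! (i' - 1)" using True
      by (auto simp: LL_def rev_nth i'_def)
    moreover have "\<not> (j \<le> \<alpha> ! (i' - 1))"
    proof
      assume "j \<le> \<alpha> ! (i' - 1)"
      then have "(i, j) \<in> {(length \<beta> - length \<alpha> + i, j) | i j. 1 \<le> i \<and> i \<le> length \<alpha> \<and> 1 \<le> j \<and> j \<le> \<alpha> ! (i - 1)}"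
        using ii j1 by blast
      then show False using i1 by (simp add: skew_def)
    qed
    ultimately show ?thesis by simp
  qed
  obtain a b where ab: "b < a" "a < length w" "w ! a = j" "w ! b = Suc j"
  proof -
    have "j < LL \<beta> p" using Lb d2 by simp
    then show ?thesis using cl La that by blast
  qed
  show "j \<in> leg k w"
  proof (rule ccontr)
    assume nl: "j \<notin> leg k w"
    have "a < k"
    proof (rule ccontr)
      assume "\<not> a < k"
      then have e: "drop k w ! (a - k) = w ! a" "a - k < length (drop k w)" using ab by auto
      then have "w ! a \<in> set (drop k w)" by (metis nth_mem)
      then show False using nl ab by (simp add: leg_def)
    qed
    have "sorted (take (Suc k) w)" using hk by (simp add: rev_khook_def)
    then have "take (Suc k) w ! b \<le> take (Suc k) w ! a"
      by (rule sorted_nth_mono) (use ab \<open>a < k\<close> in auto)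
    then show False using ab \<open>a < k\<close> by simp
  qed
qed

end
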